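(* Let $(L_*,b)$ and $(M_*,b)$ be chain complexes, $i:(L_*,b)\to(M_*,b)$ and $p:(M_*,b)\to(L_*,b)$ chain maps, and $h$ a map of degree $+1$ on $M_*$ with $ip=1+bh+hb$. Let $\delta$ be a small perturbation, put $A=(1-\delta h)^{-1}\delta$, and define $$i_\infty=i+hAi,\quad p_\infty=p+pAh,\quad h_\infty=h+hAh,\quad b_\infty=b+pAi.$$ Let $h'=p h_\infty i$ and $h''=p_\infty h i_\infty$. Then $$pi-1=bh'+h'b-(p i_\infty-1)(p_\infty i-1)$$ and $$p_\infty i_\infty-1=b_\infty h''+h''b_\infty-(p_\infty i-1)(p i_\infty-1).$$
   Context: Complexes are chain complexes of modules over a ring, with differentials of degree $-1$. A perturbation $\delta$ is a graded map $M_*\to M_*$ of the same degree as $b$ such that $(b+\delta)^2=0$. It is called small if $1-\delta h$ is invertible. It is known (homological perturbation lemma, HR version) that for a small perturbation, $(L_*,b_\infty)$ is a complex and that $i_\infty:(L_*,b_\infty)\to(M_*,b+\delta)$ and $p_\infty:(M_*,b+\delta)\to(L_*,b_\infty)$ are chain maps. *)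

theory Defs
  imports Main
begin

text \<open>
  Graded modules over a ring are modelled as families of carrier sets
  M n (n :: int) inside an ambient abelian group 'm, each closed under the
  group operations and under a scalar multiplication s by the ring 'r
  satisfying the module axioms.
\<close>

definition graded_module :: "('r::ring_1 \<Rightarrow> 'm::ab_group_add \<Rightarrow> 'm) \<Rightarrow> (int \<Rightarrow> 'm set) \<Rightarrow> bool" where
  "graded_module s M \<longleftrightarrow>
     (\<forall>n. 0 \<in> M n \<and> (\<forall>x\<in>M n. \<forall>y\<in>M n. x + y \<in> M n) \<and> (\<forall>x\<in>M n. - x \<in> M n)
        \<and> (\<forall>r. \<forall>x\<in>M n. s r x \<in> M n)
        \<and> (\<forall>x\<in>M n. \<forall>y\<in>M n. \<forall>a c. s a (x + y) = s a x + s a y \<and> s (a + c) x = s a x + s c x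
              \<and> s (a * c) x = s a (s c x) \<and> s 1 x = x))"

definition graded_map ::
  "('r::ring_1 \<Rightarrow> 'a::ab_group_add \<Rightarrow> 'a) \<Rightarrow> (int \<Rightarrow> 'a set) \<Rightarrow>
   ('r \<Rightarrow> 'b::ab_group_add \<Rightarrow> 'b) \<Rightarrow> (int \<Rightarrow> 'b set) \<Rightarrow> int \<Rightarrow> (int \<Rightarrow> 'a \<Rightarrow> 'b) \<Rightarrow> bool" where
  "graded_map sM M sN N d f \<longleftrightarrow>
     (\<forall>n. (\<forall>x\<in>M n. f n x \<in> N (n + d))
        \<and> (\<forall>x\<in>M n. \<forall>y\<in>M n. f n (x + y) = f n x + f n y)
        \<and> (\<forall>r. \<forall>x\<in>M n. f n (sM r x) = sN r (f n x)))"

text \<open>Composition g o f, where d is the degree of f.\<close>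
definition gcomp :: "(int \<Rightarrow> 'b \<Rightarrow> 'c) \<Rightarrow> int \<Rightarrow> (int \<Rightarrow> 'a \<Rightarrow> 'b) \<Rightarrow> int \<Rightarrow> 'a \<Rightarrow> 'c" where
  "gcomp g d f = (\<lambda>n x. g (n + d) (f n x))"

definition gadd :: "(int \<Rightarrow> 'a \<Rightarrow> 'b::ab_group_add) \<Rightarrow> (int \<Rightarrow> 'a \<Rightarrow> 'b) \<Rightarrow> int \<Rightarrow> 'a \<Rightarrow> 'b" where
  "gadd f g = (\<lambda>n x. f n x + g n x)"

definition gdiff :: "(int \<Rightarrow> 'a \<Rightarrow> 'b::ab_group_add) \<Rightarrow> (int \<Rightarrow> 'a \<Rightarrow> 'b) \<Rightarrow> int \<Rightarrow> 'a \<Rightarrow> 'b" where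
  "gdiff f g = (\<lambda>n x. f n x - g n x)"

definition gid :: "int \<Rightarrow> 'a \<Rightarrow> 'a" where
  "gid = (\<lambda>n x. x)"

definition gzero :: "int \<Rightarrow> 'a \<Rightarrow> 'b::zero" where
  "gzero = (\<lambda>n x. 0)"

definition geq :: "(int \<Rightarrow> 'a set) \<Rightarrow> (int \<Rightarrow> 'a \<Rightarrow> 'b) \<Rightarrow> (int \<Rightarrow> 'a \<Rightarrow> 'b) \<Rightarrow> bool" where
  "geq M f g \<longleftrightarrow> (\<forall>n. \<forall>x\<in>M n. f n x = g n x)"

definition chain_complex :: "('r::ring_1 \<Rightarrow> 'm::ab_group_add \<Rightarrow> 'm) \<Rightarrow> (int \<Rightarrow> 'm set) \<Rightarrow> (int \<Rightarrow> 'm \<Rightarrow> 'm) \<Rightarrow> bool" where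
  "chain_complex s M b \<longleftrightarrow> graded_module s M \<and> graded_map s M s M (-1) b
      \<and> geq M (gcomp b (-1) b) gzero"

definition chain_map ::
  "('r::ring_1 \<Rightarrow> 'a::ab_group_add \<Rightarrow> 'a) \<Rightarrow> (int \<Rightarrow> 'a set) \<Rightarrow> (int \<Rightarrow> 'a \<Rightarrow> 'a) \<Rightarrow>
   ('r \<Rightarrow> 'b::ab_group_add \<Rightarrow> 'b) \<Rightarrow> (int \<Rightarrow> 'b set) \<Rightarrow> (int \<Rightarrow> 'b \<Rightarrow> 'b) \<Rightarrow> (int \<Rightarrow> 'a \<Rightarrow> 'b) \<Rightarrow> bool" where
  "chain_map sL L bL sM M bM f \<longleftrightarrow> graded_map sL L sM M 0 f
      \<and> geq L (gcomp bM 0 f) (gcomp f (-1) bL)"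


text \<open>The perturbed data. Here g is the inverse of 1 - delta h, so pA g delta = (1 - delta h)^(-1) delta.\<close>
definition pA :: "(int \<Rightarrow> 'm \<Rightarrow> 'm) \<Rightarrow> (int \<Rightarrow> 'm \<Rightarrow> 'm) \<Rightarrow> int \<Rightarrow> 'm \<Rightarrow> 'm" where
  "pA g \<delta> = gcomp g (-1) \<delta>"

definition i_inf :: "(int \<Rightarrow> 'l \<Rightarrow> 'm::ab_group_add) \<Rightarrow> (int \<Rightarrow> 'm \<Rightarrow> 'm) \<Rightarrow> (int \<Rightarrow> 'm \<Rightarrow> 'm) \<Rightarrow> (int \<Rightarrow> 'm \<Rightarrow> 'm) \<Rightarrow> int \<Rightarrow> 'l \<Rightarrow> 'm" where
  "i_inf i h g \<delta> = gadd i (gcomp (gcomp h (-1) (pA g \<delta>)) 0 i)"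

definition p_inf :: "(int \<Rightarrow> 'm \<Rightarrow> 'l::ab_group_add) \<Rightarrow> (int \<Rightarrow> 'm \<Rightarrow> 'm) \<Rightarrow> (int \<Rightarrow> 'm \<Rightarrow> 'm) \<Rightarrow> (int \<Rightarrow> 'm \<Rightarrow> 'm) \<Rightarrow> int \<Rightarrow> 'm \<Rightarrow> 'l" where
  "p_inf p h g \<delta> = gadd p (gcomp (gcomp p (-1) (pA g \<delta>)) 1 h)"

definition h_inf :: "(int \<Rightarrow> 'm::ab_group_add \<Rightarrow> 'm) \<Rightarrow> (int \<Rightarrow> 'm \<Rightarrow> 'm) \<Rightarrow> (int \<Rightarrow> 'm \<Rightarrow> 'm) \<Rightarrow> int \<Rightarrow> 'm \<Rightarrow> 'm" where
  "h_inf h g \<delta> = gadd h (gcomp (gcomp h (-1) (pA g \<delta>)) 1 h)"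

definition b_inf :: "(int \<Rightarrow> 'l::ab_group_add \<Rightarrow> 'l) \<Rightarrow> (int \<Rightarrow> 'm \<Rightarrow> 'l) \<Rightarrow> (int \<Rightarrow> 'l \<Rightarrow> 'm) \<Rightarrow> (int \<Rightarrow> 'm \<Rightarrow> 'm) \<Rightarrow> (int \<Rightarrow> 'm \<Rightarrow> 'm) \<Rightarrow> int \<Rightarrow> 'l \<Rightarrow> 'l" where
  "b_inf bL p i g \<delta> = gadd bL (gcomp (gcomp p (-1) (pA g \<delta>)) 0 i)"

end

theory Submission
  imports Defs
begin


lemma gmod_add: "graded_module s M \<Longrightarrow> x \<in> M k \<Longrightarrow> y \<in> M k \<Longrightarrow> x + y \<in> M k"
  by (simp add: graded_module_def)
lemma gmod_uminus: "graded_module s M \<Longrightarrow> x \<in> M k \<Longrightarrow> - x \<in> M k"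
  by (simp add: graded_module_def)
lemma gmod_zero: "graded_module s M \<Longrightarrow> 0 \<in> M k"
  by (simp add: graded_module_def)
lemma gmod_diff: "graded_module s M \<Longrightarrow> x \<in> M k \<Longrightarrow> y \<in> M k \<Longrightarrow> x - y \<in> M k"
  using gmod_add[of s M x k "-y"] gmod_uminus[of s M y k] by simp

lemma gm_mem: "graded_map sM M sN N d f \<Longrightarrow> x \<in> M k \<Longrightarrow> j = k + d \<Longrightarrow> f k x \<in> N j"
  by (simp add: graded_map_def)
lemma gm_add: "graded_map sM M sN N d f \<Longrightarrow> x \<in> M k \<Longrightarrow> y \<in> M k \<Longrightarrow> f k (x + y) = f k x + f k y"
  by (simp add: graded_map_def)
lemma gm_zero: "graded_map sM M sN N d f \<Longrightarrow> graded_module sM M \<Longrightarrow> f k 0 = 0"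
  using gm_add[of sM M sN N d f 0 k 0] gmod_zero[of sM M k] by simp
lemma gm_uminus: "graded_map sM M sN N d f \<Longrightarrow> graded_module sM M \<Longrightarrow> x \<in> M k \<Longrightarrow> f k (- x) = - f k x"
  using gm_add[of sM M sN N d f x k "-x"] gm_zero[of sM M sN N d f k] gmod_uminus[of sM M x k]
  by (metis neg_eq_iff_add_eq_0 add_0)
lemma gm_diff: "graded_map sM M sN N d f \<Longrightarrow> graded_module sM M \<Longrightarrow> x \<in> M k \<Longrightarrow> y \<in> M k \<Longrightarrow> f k (x - y) = f k x - f k y"
  using gm_add[of sM M sN N d f x k "-y"] gm_uminus[of sM M sN N d f y k] gmod_uminus[of sM M y k]
  by simp



theorem lemma1p9:
  fixes sL :: "'r::ring_1 \<Rightarrow> 'l::ab_group_add \<Rightarrow> 'l"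
    and sM :: "'r \<Rightarrow> 'm::ab_group_add \<Rightarrow> 'm"
    and L :: "int \<Rightarrow> 'l set" and M :: "int \<Rightarrow> 'm set"
    and bL :: "int \<Rightarrow> 'l \<Rightarrow> 'l" and bM :: "int \<Rightarrow> 'm \<Rightarrow> 'm"
    and i :: "int \<Rightarrow> 'l \<Rightarrow> 'm" and p :: "int \<Rightarrow> 'm \<Rightarrow> 'l"
    and h \<delta> g :: "int \<Rightarrow> 'm \<Rightarrow> 'm"
  assumes cL: "chain_complex sL L bL"
    and cM: "chain_complex sM M bM"
    and ci: "chain_map sL L bL sM M bM i"
    and cp: "chain_map sM M bM sL L bL p"
    and hmap: "graded_map sM M sM M 1 h"
    and htpy: "geq M (gcomp i 0 p) (gadd gid (gadd (gcomp bM 1 h) (gcomp h (-1) bM)))"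
    and \<delta>map: "graded_map sM M sM M (-1) \<delta>"
    and pert: "geq M (gcomp (gadd bM \<delta>) (-1) (gadd bM \<delta>)) gzero"
    and gdeg: "\<forall>n. \<forall>x\<in>M n. g n x \<in> M n"
    and ginv1: "geq M (gcomp g 0 (gdiff gid (gcomp \<delta> 1 h))) gid"
    and ginv2: "geq M (gcomp (gdiff gid (gcomp \<delta> 1 h)) 0 g) gid"
  defines "h' \<equiv> gcomp (gcomp p 1 (h_inf h g \<delta>)) 0 i"
    and "h'' \<equiv> gcomp (gcomp (p_inf p h g \<delta>) 1 h) 0 (i_inf i h g \<delta>)"
  shows "geq L (gdiff (gcomp p 0 i) gid)
           (gdiff (gadd (gcomp bL 1 h') (gcomp h' (-1) bL))
                  (gcomp (gdiff (gcomp p 0 (i_inf i h g \<delta>)) gid) 0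
                         (gdiff (gcomp (p_inf p h g \<delta>) 0 i) gid)))
     \<and> geq L (gdiff (gcomp (p_inf p h g \<delta>) 0 (i_inf i h g \<delta>)) gid)
           (gdiff (gadd (gcomp (b_inf bL p i g \<delta>) 1 h'') (gcomp h'' (-1) (b_inf bL p i g \<delta>)))
                  (gcomp (gdiff (gcomp (p_inf p h g \<delta>) 0 i) gid) 0
                         (gdiff (gcomp p 0 (i_inf i h g \<delta>)) gid)))"
proof -
  have gL: "graded_module sL L" and bLm: "graded_map sL L sL L (-1) bL"
    and bLL: "\<And>k x. x \<in> L k \<Longrightarrow> bL (k - 1) (bL k x) = 0"
    using cL by (auto simp: chain_complex_def geq_def gcomp_def gzero_def)
  have gM: "graded_module sM M" and bMm: "graded_map sM M sM M (-1) bM"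
    and bMM: "\<And>k x. x \<in> M k \<Longrightarrow> bM (k - 1) (bM k x) = 0"
    using cM by (auto simp: chain_complex_def geq_def gcomp_def gzero_def)
  have im: "graded_map sL L sM M 0 i" and ich: "\<And>k x. x \<in> L k \<Longrightarrow> bM k (i k x) = i (k - 1) (bL k x)"
    using ci by (auto simp: chain_map_def geq_def gcomp_def)
  have pm: "graded_map sM M sL L 0 p" and pch: "\<And>k x. x \<in> M k \<Longrightarrow> bL k (p k x) = p (k - 1) (bM k x)"
    using cp by (auto simp: chain_map_def geq_def gcomp_def)
  have hp: "\<And>k x. x \<in> M k \<Longrightarrow> i k (p k x) = x + bM (k + 1) (h k x) + h (k - 1) (bM k x)"
    using htpy by (auto simp: geq_def gcomp_def gadd_def gid_def)
  have gi1: "\<And>k x. x \<in> M k \<Longrightarrow> g k (x - \<delta> (k + 1) (h k x)) = x"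
    using ginv1 by (auto simp: geq_def gcomp_def gdiff_def gid_def)
  have gi2: "\<And>k x. x \<in> M k \<Longrightarrow> g k x - \<delta> (k + 1) (h k (g k x)) = x"
    using ginv2 by (auto simp: geq_def gcomp_def gdiff_def gid_def)
  note mods = gmod_add[OF gM] gmod_uminus[OF gM] gmod_zero[OF gM] gmod_diff[OF gM]
     gmod_add[OF gL] gmod_uminus[OF gL] gmod_zero[OF gL] gmod_diff[OF gL]
  note mem0 = gm_mem[OF hmap] gm_mem[OF bMm] gm_mem[OF \<delta>map] gm_mem[OF im] gm_mem[OF pm] gm_mem[OF bLm]
  have memg: "\<And>k x j. x \<in> M k \<Longrightarrow> j = k \<Longrightarrow> g k x \<in> M j" using gdeg by simp
  note mem = mem0 memg
  note lin0 = gm_add[OF hmap] gm_uminus[OF hmap gM] gm_zero[OF hmap gM] gm_diff[OF hmap gM]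
     gm_add[OF bMm] gm_uminus[OF bMm gM] gm_zero[OF bMm gM] gm_diff[OF bMm gM]
     gm_add[OF \<delta>map] gm_uminus[OF \<delta>map gM] gm_zero[OF \<delta>map gM] gm_diff[OF \<delta>map gM]
     gm_add[OF im] gm_uminus[OF im gL] gm_zero[OF im gL] gm_diff[OF im gL]
     gm_add[OF pm] gm_uminus[OF pm gM] gm_zero[OF pm gM] gm_diff[OF pm gM]
     gm_add[OF bLm] gm_uminus[OF bLm gL] gm_zero[OF bLm gL] gm_diff[OF bLm gL]
  have g0: "\<And>k. g k 0 = 0"
    using gi1[of 0] by (simp add: lin0 mods)
  have gadd': "\<And>k x y. x \<in> M k \<Longrightarrow> y \<in> M k \<Longrightarrow> g k (x + y) = g k x + g k y"
  proof -
    fix k x y assume x: "x \<in> M k" and y: "y \<in> M k"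
    have "g k x + g k y - \<delta> (k + 1) (h k (g k x + g k y)) = (g k x - \<delta> (k + 1) (h k (g k x))) + (g k y - \<delta> (k + 1) (h k (g k y)))"
      using x y by (simp add: lin0 mods mem)
    also have "\<dots> = x + y" using gi2 x y by simp
    finally show "g k (x + y) = g k x + g k y"
      using gi1[of "g k x + g k y" k] x y by (simp add: mods mem)
  qed
  have gneg: "\<And>k x. x \<in> M k \<Longrightarrow> g k (- x) = - g k x"
  proof -
    fix k x assume x: "x \<in> M k"
    have "- g k x - \<delta> (k + 1) (h k (- g k x)) = - (g k x - \<delta> (k + 1) (h k (g k x)))"
      using x by (simp add: lin0 mods mem)
    also have "\<dots> = - x" using gi2 x by simp
    finally show "g k (- x) = - g k x"
      using gi1[of "- g k x" k] x by (simp add: mods mem)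
  qed
  have gdiff': "\<And>k x y. x \<in> M k \<Longrightarrow> y \<in> M k \<Longrightarrow> g k (x - y) = g k x - g k y"
    using gadd' gneg by (metis diff_conv_add_uminus mods(2))
  note ixs = add.commute[where 'a=int] add.left_commute[where 'a=int] add.assoc[where 'a=int]
  note lin = lin0 g0 gadd' gneg gdiff'
  have pt: "\<And>k w. w \<in> M k \<Longrightarrow> bM (k - 1) (\<delta> k w) = - \<delta> (k - 1) (bM k w) - \<delta> (k - 1) (\<delta> k w)"
  proof -
    fix k w assume w: "w \<in> M k"
    have "bM (k - 1) (bM k w + \<delta> k w) + \<delta> (k - 1) (bM k w + \<delta> k w) = 0"
      using pert w by (simp add: geq_def gcomp_def gadd_def gzero_def)
    then have "bM (k - 1) (\<delta> k w) + \<delta> (k - 1) (bM k w) + \<delta> (k - 1) (\<delta> k w) = 0"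
      using w bMM[OF w] by (simp add: lin mods mem algebra_simps)
    then show "bM (k - 1) (\<delta> k w) = - \<delta> (k - 1) (bM k w) - \<delta> (k - 1) (\<delta> k w)"
      by (simp add: algebra_simps eq_neg_iff_add_eq_0)
  qed
  have pt': "\<And>k w j. w \<in> M k \<Longrightarrow> j = k - 1 \<Longrightarrow> bM j (\<delta> k w) = - \<delta> j (bM k w) - \<delta> j (\<delta> k w)"
    using pt by blast
  have KAl: "\<And>l y. y \<in> M (l + 2) \<Longrightarrow> bM (l + 1) (g (l + 1) (\<delta> (l + 2) y)) =
      - g l (\<delta> (l + 1) (bM (l + 2) y)) - g l (\<delta> (l + 1) (i (l + 1) (p (l + 1) (g (l + 1) (\<delta> (l + 2) y)))))"
  proof -
    fix l y assume y: "y \<in> M (l + 2)"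
    define a where "a = g (l + 1) (\<delta> (l + 2) y)"
    have a: "a \<in> M (l + 1)" unfolding a_def using y by (simp add: mem)
    have aeq: "a - \<delta> (l + 2) (h (l + 1) a) = \<delta> (l + 2) y"
      using gi2[of "\<delta> (l + 2) y" "l + 1"] y unfolding a_def by (simp add: mem add.assoc)
    define z where "z = bM (l + 1) a + g l (\<delta> (l + 1) (bM (l + 2) y)) + g l (\<delta> (l + 1) (i (l + 1) (p (l + 1) a)))"
    have z: "z \<in> M l" unfolding z_def using y a by (simp add: mem mods)
    have h1: "z - \<delta> (l + 1) (h l z) = bM (l + 1) a - \<delta> (l + 1) (h l (bM (l + 1) a)) + \<delta> (l + 1) (bM (l + 2) y) + \<delta> (l + 1) (i (l + 1) (p (l + 1) a))"
    proof -
      have e1: "g l (\<delta> (l + 1) (bM (l + 2) y)) - \<delta> (l + 1) (h l (g l (\<delta> (l + 1) (bM (l + 2) y)))) = \<delta> (l + 1) (bM (l + 2) y)"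
        using gi2[of "\<delta> (l + 1) (bM (l + 2) y)" l] y by (simp add: mem)
      have e2: "g l (\<delta> (l + 1) (i (l + 1) (p (l + 1) a))) - \<delta> (l + 1) (h l (g l (\<delta> (l + 1) (i (l + 1) (p (l + 1) a))))) = \<delta> (l + 1) (i (l + 1) (p (l + 1) a))"
        using gi2[of "\<delta> (l + 1) (i (l + 1) (p (l + 1) a))" l] a by (simp add: mem)
      show ?thesis unfolding z_def using y a e1 e2 by (simp add: lin mods mem algebra_simps)
    qed
    have h2: "\<delta> (l + 1) (h l (bM (l + 1) a)) = \<delta> (l + 1) (i (l + 1) (p (l + 1) a)) - \<delta> (l + 1) a - \<delta> (l + 1) (bM (l + 2) (h (l + 1) a))"
      using hp[OF a] a by (simp add: lin mods mem algebra_simps)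
    have h3: "bM (l + 1) a = - \<delta> (l + 1) (bM (l + 2) y) - \<delta> (l + 1) (\<delta> (l + 2) y) - \<delta> (l + 1) (bM (l + 2) (h (l + 1) a)) - \<delta> (l + 1) (\<delta> (l + 2) (h (l + 1) a))"
    proof -
      have "a = \<delta> (l + 2) y + \<delta> (l + 2) (h (l + 1) a)" using aeq by (simp add: algebra_simps)
      then have "bM (l + 1) a = bM (l + 1) (\<delta> (l + 2) y + \<delta> (l + 2) (h (l + 1) a))"
        by (rule arg_cong)
      also have "\<dots> = bM (l + 1) (\<delta> (l + 2) y) + bM (l + 1) (\<delta> (l + 2) (h (l + 1) a))"
        using y a by (simp add: lin mem)
      also have "\<dots> = - \<delta> (l + 1) (bM (l + 2) y) - \<delta> (l + 1) (\<delta> (l + 2) y) - \<delta> (l + 1) (bM (l + 2) (h (l + 1) a)) - \<delta> (l + 1) (\<delta> (l + 2) (h (l + 1) a))"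
      proof -
        have p1: "bM (l + 1) (\<delta> (l + 2) y) = - \<delta> (l + 1) (bM (l + 2) y) - \<delta> (l + 1) (\<delta> (l + 2) y)"
          using pt'[of y "l + 2" "l + 1"] y by simp
        have p2: "bM (l + 1) (\<delta> (l + 2) (h (l + 1) a)) = - \<delta> (l + 1) (bM (l + 2) (h (l + 1) a)) - \<delta> (l + 1) (\<delta> (l + 2) (h (l + 1) a))"
          using pt'[of "h (l + 1) a" "l + 2" "l + 1"] a by (simp add: mem ixs)
        show ?thesis unfolding p1 p2 by (simp add: algebra_simps)
      qed
      finally show ?thesis .
    qed
    have h4: "\<delta> (l + 1) a = \<delta> (l + 1) (\<delta> (l + 2) y) + \<delta> (l + 1) (\<delta> (l + 2) (h (l + 1) a))"
    proof -
      have "a = \<delta> (l + 2) y + \<delta> (l + 2) (h (l + 1) a)" using aeq by (simp add: algebra_simps)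
      then have "\<delta> (l + 1) a = \<delta> (l + 1) (\<delta> (l + 2) y + \<delta> (l + 2) (h (l + 1) a))"
        by (rule arg_cong)
      also have "\<dots> = \<delta> (l + 1) (\<delta> (l + 2) y) + \<delta> (l + 1) (\<delta> (l + 2) (h (l + 1) a))"
        using y a by (simp add: lin mem)
      finally show ?thesis .
    qed
    have "z - \<delta> (l + 1) (h l z) = bM (l + 1) a + \<delta> (l + 1) a + \<delta> (l + 1) (bM (l + 2) (h (l + 1) a)) + \<delta> (l + 1) (bM (l + 2) y)"
      unfolding h1 h2 by (simp add: algebra_simps)
    also have "\<dots> = 0"
      unfolding h3 h4 by (simp add: algebra_simps)
    finally have "z - \<delta> (l + 1) (h l z) = 0" .
    then have "z = 0" using gi1[OF z] g0 by simp
    then show "bM (l + 1) (g (l + 1) (\<delta> (l + 2) y)) =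
      - g l (\<delta> (l + 1) (bM (l + 2) y)) - g l (\<delta> (l + 1) (i (l + 1) (p (l + 1) (g (l + 1) (\<delta> (l + 2) y)))))"
      unfolding z_def a_def by (simp add: algebra_simps eq_neg_iff_add_eq_0)
  qed
  have R2: "\<And>k y j. y \<in> M k \<Longrightarrow> j = k - 1 \<Longrightarrow> bM j (g j (\<delta> k y)) =
      - g (j - 1) (\<delta> j (bM k y)) - g (j - 1) (\<delta> j (i j (p j (g j (\<delta> k y)))))"
  proof -
    fix k y j assume y: "y \<in> M k" and j: "j = k - 1"
    have k: "k = (k - 2) + 2" by simp
    have "y \<in> M ((k - 2) + 2)" using y by simp
    from KAl[OF this] show "bM j (g j (\<delta> k y)) =
      - g (j - 1) (\<delta> j (bM k y)) - g (j - 1) (\<delta> j (i j (p j (g j (\<delta> k y)))))"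
      unfolding j by simp
  qed
  have R1: "\<And>k y j. y \<in> M k \<Longrightarrow> j = k + 1 \<Longrightarrow> bM j (h k y) = i k (p k y) - y - h (k - 1) (bM k y)"
    using hp by (simp add: algebra_simps)
  have R3: "\<And>k y j m. y \<in> M k \<Longrightarrow> j = k \<Longrightarrow> m = k \<Longrightarrow> bM j (i m (p k y)) = i (k - 1) (p (k - 1) (bM k y))"
    using ich pch by (simp add: mem)
  have R5: "\<And>k y j. y \<in> M k \<Longrightarrow> j = k - 1 \<Longrightarrow> bM j (bM k y) = 0"
    using bMM by simp
  have C1: "\<And>k x j. x \<in> L k \<Longrightarrow> j = k - 1 \<Longrightarrow> i j (bL k x) = bM k (i k x)"
    using ich by simp
  have C2: "\<And>k y j. y \<in> M k \<Longrightarrow> j = k \<Longrightarrow> bL j (p k y) = p (k - 1) (bM k y)"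
    using pch by simp
  note rules = R1 R2 R3 pt' R5 C1 C2
  show ?thesis
    unfolding h'_def h''_def i_inf_def p_inf_def h_inf_def b_inf_def pA_def geq_def gcomp_def gadd_def gdiff_def gid_def
    apply (intro conjI allI ballI)
     apply (simp add: lin mem mods rules ixs)
     apply (simp add: algebra_simps)
    apply (simp add: lin mem mods rules ixs)
    done
qed

end
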